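(* Let $F\subsetneq K$ be fields of characteristic $0$, with $F$ a proper nonempty subfield of $K$. Let $p(x)=\sum_{k=0}^{n}a_k x^k\in K[x]$ with $a_n\neq 0$, and let $q(x)=\sum_{j=0}^{m}b_j x^j\in F[x]$ with $b_m\neq 0$. Then $D_F(p\circ q)=D_F(p)\,D_F(q)$.
   Context: For sets $F\subset K$ and $p(x)=\sum_{k=0}^{n}a_kx^k\in K[x]$ with $a_n\neq 0$, the $F$ deficit $D_F(p)$ is defined as follows: if $p\in K[x]\setminus F[x]$, then $D_F(p)=n-\max\{0\le k\le n: a_k\notin F\}$; if $p\in F[x]$, then $D_F(p)=n$. Here $F[x]$ denotes the set of polynomials with all coefficients in $F$. *)

theory Defs
  imports "HOL-Computational_Algebra.Polynomial"
begin

definition is_subfield :: "'a::field set \<Rightarrow> bool" where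
  "is_subfield F \<longleftrightarrow> 0 \<in> F \<and> 1 \<in> F \<and>
     (\<forall>x\<in>F. \<forall>y\<in>F. x + y \<in> F) \<and> (\<forall>x\<in>F. - x \<in> F) \<and>
     (\<forall>x\<in>F. \<forall>y\<in>F. x * y \<in> F) \<and> (\<forall>x\<in>F. x \<noteq> 0 \<longrightarrow> inverse x \<in> F)"

definition in_poly_over :: "'a::zero poly \<Rightarrow> 'a set \<Rightarrow> bool" where
  "in_poly_over p F \<longleftrightarrow> (\<forall>k \<le> degree p. coeff p k \<in> F)"

definition deficit :: "'a::zero set \<Rightarrow> 'a poly \<Rightarrow> nat" where
  "deficit F p = (if in_poly_over p F then degree p
                  else degree p - Max {k. k \<le> degree p \<and> coeff p k \<notin> F})"

end

theory Submission
  imports Defs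
begin

definition allc :: "'a::field set \<Rightarrow> 'a poly \<Rightarrow> bool" where
  "allc F p \<longleftrightarrow> (\<forall>k. coeff p k \<in> F)"

lemma sf: assumes "is_subfield F"
  shows "0 \<in> F" "1 \<in> F" "x \<in> F \<Longrightarrow> y \<in> F \<Longrightarrow> x + y \<in> F"
    "x \<in> F \<Longrightarrow> - x \<in> F" "x \<in> F \<Longrightarrow> y \<in> F \<Longrightarrow> x * y \<in> F"
    "x \<in> F \<Longrightarrow> x \<noteq> 0 \<Longrightarrow> inverse x \<in> F"
  using assms unfolding is_subfield_def by auto

lemma sf_sum: assumes "is_subfield F" "\<And>i. i \<in> A \<Longrightarrow> f i \<in> F"
  shows "sum f A \<in> F"
  using assms(2)
proof (induction A rule: infinite_finite_induct)
  case (infinite A) then show ?case using sf(1)[OF assms(1)] by simp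
next
  case empty then show ?case using sf(1)[OF assms(1)] by simp
next
  case (insert x A) then show ?case using sf(3)[OF assms(1)] by simp
qed

lemma sf_pow: assumes "is_subfield F" "x \<in> F" shows "x ^ n \<in> F"
  by (induction n) (auto intro: sf[OF assms(1)] assms(2))

lemma allc_iff: "allc F p \<longleftrightarrow> in_poly_over p F \<and> 0 \<in> F"
  unfolding allc_def in_poly_over_def
proof safe
  fix k assume h: "\<forall>k\<le>degree p. coeff p k \<in> F" "0 \<in> F"
  show "coeff p k \<in> F"
  proof (cases "k \<le> degree p")
    case False then show ?thesis using h by (simp add: coeff_eq_0)
  qed (use h in auto)
next
  assume "\<forall>k. coeff p k \<in> F"
  then have "coeff p (Suc (degree p)) \<in> F" by blast
  then show "0 \<in> F" by (simp add: coeff_eq_0)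
qed auto

lemma allc_add: "is_subfield F \<Longrightarrow> allc F p \<Longrightarrow> allc F q \<Longrightarrow> allc F (p + q)"
  unfolding allc_def using sf(3) by (simp add: sf(3))

lemma allc_mult: "is_subfield F \<Longrightarrow> allc F p \<Longrightarrow> allc F q \<Longrightarrow> allc F (p * q)"
  unfolding allc_def coeff_mult by (auto intro!: sf_sum sf(5))

lemma allc_const: "is_subfield F \<Longrightarrow> a \<in> F \<Longrightarrow> allc F [:a:]"
  unfolding allc_def using sf(1) by (auto simp: coeff_pCons split: nat.splits)

lemma allc_pcomp: assumes "is_subfield F" "allc F p" "allc F q"
  shows "allc F (pcompose p q)"
  using assms(2)
proof (induction p)
  case 0 then show ?case using sf(1)[OF assms(1)] by (simp add: allc_def)
next
  case (pCons a p)
  have "allc F p" "a \<in> F" using pCons.prems unfolding allc_def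
    by (metis coeff_pCons_Suc, metis coeff_pCons_0)
  then show ?case unfolding pcompose_pCons
    using pCons.IH assms by (intro allc_add allc_mult allc_const) auto
qed

theorem theorem5:
  fixes F :: "'a::field_char_0 set" and p q :: "'a poly"
  assumes "is_subfield F" and "F \<noteq> UNIV"
    and "p \<noteq> 0" and "q \<noteq> 0" and "in_poly_over q F"
  shows "deficit F (pcompose p q) = deficit F p * deficit F q"
proof -
  note S = sf[OF assms(1)]
  have qF: "allc F q" using assms(5) S(1) allc_iff by blast
  have dq: "deficit F q = degree q" using assms(5) by (simp add: deficit_def)
  show ?thesis
  proof (cases "degree q = 0")
    case True
    then have "degree (pcompose p q) = 0" by (simp add: degree_pcompose)
    then show ?thesis using True dq by (simp add: deficit_def)
  next
    case qpos: False
    show ?thesis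
    proof (cases "in_poly_over p F")
      case True
      then have "allc F p" using S(1) allc_iff by blast
      then have "in_poly_over (pcompose p q) F" using allc_pcomp[OF assms(1) _ qF] allc_iff by blast
      then show ?thesis using True dq by (simp add: deficit_def degree_pcompose)
    next
      case pnot: False
      define A where "A = {k. k \<le> degree p \<and> coeff p k \<notin> F}"
      define r where "r = Max A"
      have Afin: "finite A" unfolding A_def by simp
      have Ane: "A \<noteq> {}" using pnot unfolding A_def in_poly_over_def by auto
      have rA: "r \<in> A" unfolding r_def using Afin Ane by simp
      have rmax: "\<And>k. k \<in> A \<Longrightarrow> k \<le> r" unfolding r_def using Afin by simp
      have rn: "r \<le> degree p" and arF: "coeff p r \<notin> F" using rA unfolding A_def by auto
      have ar0: "coeff p r \<noteq> 0" using arF S(1) by auto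
      have above: "coeff p k \<in> F" if "k > r" for k
      proof (cases "k \<le> degree p")
        case True then show ?thesis using rmax[of k] that unfolding A_def by force
      next
        case False then show ?thesis using S(1) by (simp add: coeff_eq_0)
      qed
      define p2 where "p2 = poly_cutoff (Suc r) p"
      define p1 where "p1 = p - p2"
      have cp2: "coeff p2 k = (if k \<le> r then coeff p k else 0)" for k
        unfolding p2_def coeff_poly_cutoff by auto
      have p1F: "allc F p1" unfolding allc_def p1_def using cp2 above S(1) by auto
      have dp2: "degree p2 = r"
      proof (rule antisym)
        show "degree p2 \<le> r" by (rule degree_le) (auto simp: cp2)
        show "r \<le> degree p2" by (rule le_degree) (simp add: cp2 ar0)
      qed
      have lc2: "lead_coeff p2 = coeff p r" using dp2 cp2 by simp
      define m where "m = degree q"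
      define b where "b = lead_coeff q"
      have bF: "b \<in> F" using qF unfolding allc_def b_def by simp
      have b0: "b \<noteq> 0" using assms(4) unfolding b_def by simp
      have d2: "degree (pcompose p2 q) = r * m" using dp2 by (simp add: degree_pcompose m_def)
      have lcc: "coeff (pcompose p2 q) (r*m) = coeff p r * b ^ r"
        using lead_coeff_comp[of q p2] qpos d2 lc2 dp2 unfolding b_def by simp
      have pq: "pcompose p q = pcompose p1 q + pcompose p2 q"
        unfolding p1_def by (simp add: pcompose_diff)
      have c1F: "coeff (pcompose p1 q) k \<in> F" for k
        using allc_pcomp[OF assms(1) p1F qF] unfolding allc_def by blast
      have dpq: "degree (pcompose p q) = degree p * m" by (simp add: degree_pcompose m_def)
      have notF: "coeff (pcompose p q) (r*m) \<notin> F"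
      proof
        assume h: "coeff (pcompose p q) (r*m) \<in> F"
        have "coeff p r * b ^ r = coeff (pcompose p q) (r*m) + - coeff (pcompose p1 q) (r*m)"
          using pq lcc by simp
        also have "\<dots> \<in> F" using h c1F S(3) S(4) by metis
        finally have "coeff p r * b ^ r \<in> F" .
        moreover have "b ^ r \<in> F" using sf_pow[OF assms(1) bF] .
        moreover have "b ^ r \<noteq> 0" using b0 by simp
        ultimately have "coeff p r * b ^ r * inverse (b ^ r) \<in> F" using S(5) S(6) by metis
        moreover have "coeff p r * b ^ r * inverse (b ^ r) = coeff p r" using b0 by (simp add: field_simps)
        ultimately show False using arF by simp
      qed
      have abv: "coeff (pcompose p q) k \<in> F" if "k > r*m" for k
        using pq c1F[of k] d2 that by (simp add: coeff_eq_0)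
      define B where "B = {k. k \<le> degree (pcompose p q) \<and> coeff (pcompose p q) k \<notin> F}"
      have rmB: "r*m \<in> B" unfolding B_def using notF dpq rn by auto
      have MB: "Max B = r*m"
      proof (rule Max_eqI)
        show "finite B" unfolding B_def by simp
        show "r*m \<in> B" by (rule rmB)
        fix y assume "y \<in> B" then show "y \<le> r*m" using abv[of y] unfolding B_def by (auto simp: not_less[symmetric])
      qed
      have "\<not> in_poly_over (pcompose p q) F" using rmB unfolding B_def in_poly_over_def by auto
      then have "deficit F (pcompose p q) = degree p * m - r * m"
        using MB dpq unfolding deficit_def B_def by simp
      moreover have "deficit F p = degree p - r" using pnot unfolding deficit_def r_def A_def by simp
      ultimately show ?thesis using dq m_def by (simp add: diff_mult_distrib)
    qed
  qed
qed

end
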